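(* Let $B$ be the $3\times 2$ integer matrix of rank two \[ B = \begin{bmatrix} \phantom{-\lambda} r & \phantom{-\lambda} s \\ -\lambda r & -\lambda s \\ \phantom{-\lambda} a & \phantom{-\lambda} b \end{bmatrix} \] where $r, s, a, b$ are positive integers, $a \leq b$, $r \geq s$, $\gcd(r,s)=d$, and $0<\lambda = p/q$ in lowest terms (so that $q$ divides $r$ and $s$, since $\lambda r,\lambda s$ are integers), and set $M = \left[ \begin{smallmatrix} r/q & s/q \\ a & b \end{smallmatrix} \right]$. Given $\ell \in \mathbb{N}$, let $\phi_\ell : \mathbb{N}^2 \to \mathbb{Z}^3$ be the injective map $(w,k) \mapsto (qw, \lambda(q\ell - qw), k) = (qw, p(\ell - w), k)$. Then the image under $\phi_\ell$ of the band graph $G_\ell(M)$ is the slice graph $G_{S(q\ell)}(B)$.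
   Context: Notation: $\mathbb{N}=\{0,1,2,\dots\}$. For a subset $Q\subseteq \mathbb{Z}^n$ and an $n\times m$ integer matrix $M$, $G_Q(M)$ is the graph whose vertices are the elements of $Q$, with two vertices $u,v\in Q$ joined by an edge if and only if $u-v$ or $v-u$ is a column of $M$. For a rank two $2\times 2$ integer matrix $M$ with all entries positive and $\ell\in\mathbb{N}$, the band graph is $G_\ell(M) = G_{Q_\ell}(M)$ with $Q_\ell = \{u \in \mathbb{N}^2 \mid u_1 \leq \ell\}$. For $B$ as in the claim and $\ell$, the slice $S(\ell)$ is $\mathbb{N}^3 \cap \{(u_x,u_y,u_z) \mid u_y = -\lambda u_x + \lambda \ell\}$, and $G_{S(\ell)}(B)$ is the $\ell$th slice graph of $B$. The image $\phi_\ell(\{(w,k)\in\mathbb{N}^2 \mid 0\le w\le \ell\})$ is exactly the intersection with $\mathbb{N}^3$ of the hyperplane $u_y=-\lambda u_x+\lambda q\ell$. *)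

theory Defs
  imports Complex_Main "HOL-Library.Product_Plus"
begin

text \<open>The graph G_Q(M): vertices Q, and an (undirected, stored symmetrically) edge
  between u and v iff u - v or v - u is a column of M. A matrix is represented
  by the set of its columns C.\<close>
definition col_graph :: "'a::minus set \<Rightarrow> 'a set \<Rightarrow> 'a set \<times> ('a \<times> 'a) set" where
  "col_graph Q C = (Q, {(u, v). u \<in> Q \<and> v \<in> Q \<and> (u - v \<in> C \<or> v - u \<in> C)})"

definition graph_image :: "('a \<Rightarrow> 'b) \<Rightarrow> 'a set \<times> ('a \<times> 'a) set \<Rightarrow> 'b set \<times> ('b \<times> 'b) set" where
  "graph_image f G = (f ` fst G, (\<lambda>(u, v). (f u, f v)) ` snd G)"

definition Q_band :: "nat \<Rightarrow> (int \<times> int) set" where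
  "Q_band l = {(u1, u2). 0 \<le> u1 \<and> 0 \<le> u2 \<and> u1 \<le> int l}"

definition band_graph :: "nat \<Rightarrow> (int \<times> int) set \<Rightarrow> (int \<times> int) set \<times> ((int \<times> int) \<times> (int \<times> int)) set" where
  "band_graph l C = col_graph (Q_band l) C"

definition slice :: "rat \<Rightarrow> nat \<Rightarrow> (int \<times> int \<times> int) set" where
  "slice lam l = {(ux, uy, uz). 0 \<le> ux \<and> 0 \<le> uy \<and> 0 \<le> uz \<and>
      of_int uy = - lam * of_int ux + lam * of_nat l}"

definition slice_graph :: "rat \<Rightarrow> nat \<Rightarrow> (int \<times> int \<times> int) set \<Rightarrow> _" where
  "slice_graph lam l C = col_graph (slice lam l) C"

end

theory Submission
  imports Defs
begin

lemma gen_image: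
  assumes img: "f ` Q = Q'"
    and diff: "\<And>x y. x \<in> Q \<Longrightarrow> y \<in> Q \<Longrightarrow> (f x - f y \<in> C') = (x - y \<in> C)"
  shows "graph_image f (col_graph Q C) = col_graph Q' C'"
proof -
  have "(\<lambda>(u, v). (f u, f v)) ` {(u, v). u \<in> Q \<and> v \<in> Q \<and> (u - v \<in> C \<or> v - u \<in> C)}
        = {(u, v). u \<in> Q' \<and> v \<in> Q' \<and> (u - v \<in> C' \<or> v - u \<in> C')}"
  proof (intro equalityI subsetI)
    fix z assume "z \<in> (\<lambda>(u, v). (f u, f v)) ` {(u, v). u \<in> Q \<and> v \<in> Q \<and> (u - v \<in> C \<or> v - u \<in> C)}"
    then obtain x y where z: "z = (f x, f y)" and xy: "x \<in> Q" "y \<in> Q" "x - y \<in> C \<or> y - x \<in> C" by auto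
    then show "z \<in> {(u, v). u \<in> Q' \<and> v \<in> Q' \<and> (u - v \<in> C' \<or> v - u \<in> C')}"
      using img diff[OF xy(1,2)] diff[OF xy(2,1)] by auto
  next
    fix z assume "z \<in> {(u, v). u \<in> Q' \<and> v \<in> Q' \<and> (u - v \<in> C' \<or> v - u \<in> C')}"
    then obtain u v where z: "z = (u, v)" and uv: "u \<in> Q'" "v \<in> Q'" "u - v \<in> C' \<or> v - u \<in> C'" by auto
    from uv(1) img obtain x where x: "x \<in> Q" "u = f x" by auto
    from uv(2) img obtain y where y: "y \<in> Q" "v = f y" by auto
    have "x - y \<in> C \<or> y - x \<in> C" using uv(3) diff[OF x(1) y(1)] diff[OF y(1) x(1)] x y by auto
    then show "z \<in> (\<lambda>(u, v). (f u, f v)) ` {(u, v). u \<in> Q \<and> v \<in> Q \<and> (u - v \<in> C \<or> v - u \<in> C)}"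
      using x y z by (auto intro!: image_eqI[where x="(x,y)"])
  qed
  then show ?thesis using img unfolding graph_image_def col_graph_def by simp
qed

theorem lemma4p5:
  fixes r s a b d p q :: int and l :: nat
  assumes pos: "r > 0" "s > 0" "a > 0" "b > 0"
    and ab: "a \<le> b" and rs: "r \<ge> s" and dgcd: "d = gcd r s"
    and pq: "p > 0" "q > 0" "coprime p q"
    and Bint: "q dvd p * r" "q dvd p * s"
    and rankB: "\<forall>x y :: rat. x * of_int r + y * of_int s = 0
                 \<and> x * of_int (- (p * r div q)) + y * of_int (- (p * s div q)) = 0
                 \<and> x * of_int a + y * of_int b = 0 \<longrightarrow> x = 0 \<and> y = 0"
  shows "graph_image (\<lambda>(w, k). (q * w, p * (int l - w), k))
           (band_graph l {(r div q, a), (s div q, b)})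
         = slice_graph (of_int p / of_int q) (nat q * l)
             {(r, - (p * r div q), a), (s, - (p * s div q), b)}"
proof -
  have cq: "coprime q p" using pq(3) by (simp add: coprime_commute)
  have "q dvd r" using Bint(1) cq coprime_dvd_mult_right_iff by blast
  then obtain r' where r': "r = q * r'" by (auto elim: dvdE)
  have "q dvd s" using Bint(2) cq coprime_dvd_mult_right_iff by blast
  then obtain s' where s': "s = q * s'" by (auto elim: dvdE)
  have rd: "r div q = r'" "p * r div q = p * r'" using r' pq(2) by simp_all
  have sd: "s div q = s'" "p * s div q = p * s'" using s' pq(2) by simp_all
  define f :: "int \<times> int \<Rightarrow> int \<times> int \<times> int" where "f = (\<lambda>(w, k). (q * w, p * (int l - w), k))"
  have img: "f ` Q_band l = slice (of_int p / of_int q) (nat q * l)"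
  proof (intro equalityI subsetI)
    fix z assume "z \<in> f ` Q_band l"
    then obtain w k where z: "z = f (w,k)" and wk: "0 \<le> w" "0 \<le> k" "w \<le> int l"
      unfolding Q_band_def by auto
    have "(of_int (p * (int l - w)) :: rat) = - (of_int p / of_int q) * of_int (q * w)
           + of_int p / of_int q * of_nat (nat q * l)"
      using pq(2) by (simp add: field_simps)
    then show "z \<in> slice (of_int p / of_int q) (nat q * l)"
      using z wk pq unfolding slice_def f_def by simp
  next
    fix z assume "z \<in> slice (of_int p / of_int q) (nat q * l)"
    then obtain ux uy uz where z: "z = (ux, uy, uz)" and h: "0 \<le> ux" "0 \<le> uy" "0 \<le> uz"
      "(of_int uy :: rat) = - (of_int p / of_int q) * of_int ux + of_int p / of_int q * of_nat (nat q * l)"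
      unfolding slice_def by auto
    have "(of_int (q * uy) :: rat) = of_int (p * (q * int l - ux))"
      using h(4) pq(2) by (simp add: field_simps)
    then have e: "q * uy = p * (q * int l - ux)" by (simp only: of_int_eq_iff)
    then have "p * ux = q * (p * int l - uy)" by (simp add: algebra_simps)
    then have "q dvd p * ux" by simp
    then have "q dvd ux" using cq coprime_dvd_mult_right_iff by blast
    then obtain w where w: "ux = q * w" by (auto elim: dvdE)
    have "q * uy = q * (p * (int l - w))" using e w by (simp add: algebra_simps)
    then have uy: "uy = p * (int l - w)" using pq(2) by simp
    have "0 \<le> w" using h(1) w pq(2) by (simp add: zero_le_mult_iff)
    moreover have "w \<le> int l" using h(2) uy pq(1) by (simp add: zero_le_mult_iff)
    ultimately show "z \<in> f ` Q_band l" using z w uy h(3)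
      unfolding Q_band_def f_def by (auto intro!: image_eqI[where x="(w,uz)"])
  qed
  have diff: "(f x - f y \<in> {(r, - (p * r div q), a), (s, - (p * s div q), b)})
      = (x - y \<in> {(r div q, a), (s div q, b)})" for x y
  proof -
    obtain x1 x2 y1 y2 where xy: "x = (x1,x2)" "y = (y1,y2)" by fastforce
    have "f x - f y = (q * (x1 - y1), - p * (x1 - y1), x2 - y2)"
      unfolding f_def xy by (simp add: algebra_simps)
    then show ?thesis using pq(1,2) unfolding rd sd r' s' xy by auto
  qed
  show ?thesis
    unfolding band_graph_def slice_graph_def f_def[symmetric]
    by (rule gen_image[OF img diff])
qed

end
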